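(* Consider the signal design problem described in the context: maximize over $T\ge2\delta$ the average flow-rate $\bar g(T)=\min\{\phi_1(T),(1-\frac{2\delta}{T})\pi_0C,\phi_2(T)\}$, where in $\phi_1,\phi_2$ the ratio $\pi$ is approximated by $\pi_0$. Then the optimal cycle lengths are: (1) Very sparse traffic, $k_0\in[0,\pi_0\bar K)$: the maximum is $\bar g^*\approx Vk_0$, with multiple optimal cycle lengths $T^*=\frac1{j_1}\frac LV$ for positive integers $j_1$ such that $Vk_0\le(1-\frac{2\delta}{T^*})\pi_0C$. (2) Sparse traffic, $k_0\in[\pi_0\bar K,\bar K)$: the maximum is determined by the intersection of $(1-\frac{2\delta}T)\pi_0C$ with the last decreasing branch $\frac{k_0L}{T}$ of $\phi_1$, namely $\bar g^*\approx\max_{T\in[\frac LV,\frac1{\pi_0}\frac LV]}\min\{\frac{k_0L}{T},(1-\frac{2\delta}T)\pi_0C\}$, with a unique optimal cycle length $T^*=\frac{k_0L}{\pi_0C}+2\delta$. (3) Critical traffic, $k_0=\bar K$: the maximum is determined by $(1-\frac{2\delta}T)\pi_0C$, and the unique optimal cycle length is $T^*=\infty$. (4) Dense traffic, $k_0\in(\bar K,K-\pi_0\frac CW]$: the maximum is determined by the intersection of $(1-\frac{2\delta}T)\pi_0C$ with the last decreasing branch $\frac{(K-k_0)L}{T}$ of $\phi_2$, namely $\bar g^*\approx\max_{T\in[\frac LW,\frac1{\pi_0}\frac LW]}\min\{\frac{(K-k_0)L}{T},(1-\frac{2\delta}T)\pi_0C\}$, with a unique optimal cycle length $T^*=\frac{(K-k_0)L}{\pi_0C}+2\delta$.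 (5) Very dense traffic, $k_0\in(K-\pi_0\frac CW,K]$: the maximum is $\bar g^*\approx(K-k_0)W$, with multiple optimal cycle lengths $T^*=\frac1{j_2}\frac LW$ for positive integers $j_2$ such that $(K-k_0)W\le(1-\frac{2\delta}{T^*})\pi_0C$.
   Context: Signalized ring road of length $L>0$ with LWR traffic, triangular fundamental diagram $Q(k)=\min\{Vk,(K-k)W\}$, $\bar K=\frac{W}{V+W}K$, $C=V\bar K$, average density $k_0\in[0,K]$, pretimed two-phase signal with cycle length $T$. With a start-up lost time $\delta>0$ per phase and a fixed allocation ratio $\pi_0\in(0,1)$ of the total effective green time $T-2\delta$, the effective green ratio is $\pi=(1-\frac{2\delta}T)\pi_0$, $T\ge2\delta$. In stationary states the average flow-rate is $\bar g=\min\{\phi_1,\pi C,\phi_2\}$ with $\phi_1=\frac{k_0}{k_1}\pi C$, $\phi_2=\frac{K-k_0}{K-k_2}\pi C$, where $\frac LV=(j_1+\alpha_1)T$, $j_1=\lfloor L/(VT)\rfloor$, $0\le\alpha_1<1$, $\frac LW=(j_2+\alpha_2)T$, $j_2=\lfloor L/(WT)\rfloor$, $0\le\alpha_2<1$, $k_1=\frac{j_1+\min\{\alpha_1/\pi,1\}}{j_1+\alpha_1}\pi\bar K$, $k_2=K-\frac{j_2+\min\{\alpha_2/\pi,1\}}{j_2+\alpha_2}\pi\frac CW$. Assuming $L/V$ and $L/W$ are much larger than $2\delta$, $\pi$ is replaced by $\pi_0$ in $\phi_1,\phi_2$ (but not in the term $\pi C=(1-\frac{2\delta}T)\pi_0C$),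 and the objective is $\max_{T\ge2\delta}\min\{\phi_1,(1-\frac{2\delta}T)\pi_0C,\phi_2\}$.
   Formalization: Case (1) (resp. (5)) holds only when some positive integer $j_1$ (resp. $j_2$) satisfies $Vk_0\le(1-\frac{2\delta}{T^*})\pi_0C$ (resp. $(K-k_0)W\le(1-\frac{2\delta}{T^*})\pi_0C$), and case (2) (resp. (4)) only when its $T^*$ is below $\frac1{\pi_0}\frac LV$ (resp. $\frac1{\pi_0}\frac LW$). The statement above fails without it. *)

theory Defs
  imports Complex_Main
begin

text \<open>Triangular fundamental diagram parameters: free-flow speed V, shock-wave speed W,
  jam density K. Critical density and capacity.\<close>

definition Kbar :: "real \<Rightarrow> real \<Rightarrow> real \<Rightarrow> real" where
  "Kbar K V W = W / (V + W) * K"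

definition Cap :: "real \<Rightarrow> real \<Rightarrow> real \<Rightarrow> real" where
  "Cap K V W = V * Kbar K V W"

text \<open>k1 and k2 with pi replaced by pi0; L/V = (j1 + alpha1) T etc.\<close>

definition k1 :: "real \<Rightarrow> real \<Rightarrow> real \<Rightarrow> real \<Rightarrow> real \<Rightarrow> real \<Rightarrow> real" where
  "k1 L V W K pi0 T =
     (let x = L / (V * T); j = real_of_int \<lfloor>x\<rfloor>; a = x - j
      in (j + min (a / pi0) 1) / (j + a) * pi0 * Kbar K V W)"

definition k2 :: "real \<Rightarrow> real \<Rightarrow> real \<Rightarrow> real \<Rightarrow> real \<Rightarrow> real \<Rightarrow> real" where
  "k2 L V W K pi0 T =
     (let x = L / (W * T); j = real_of_int \<lfloor>x\<rfloor>; a = x - j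
      in K - (j + min (a / pi0) 1) / (j + a) * pi0 * (Cap K V W / W))"

definition phi1 :: "real \<Rightarrow> real \<Rightarrow> real \<Rightarrow> real \<Rightarrow> real \<Rightarrow> real \<Rightarrow> real \<Rightarrow> real" where
  "phi1 L V W K k0 pi0 T = k0 / k1 L V W K pi0 T * pi0 * Cap K V W"

definition phi2 :: "real \<Rightarrow> real \<Rightarrow> real \<Rightarrow> real \<Rightarrow> real \<Rightarrow> real \<Rightarrow> real \<Rightarrow> real" where
  "phi2 L V W K k0 pi0 T = (K - k0) / (K - k2 L V W K pi0 T) * pi0 * Cap K V W"

definition capline :: "real \<Rightarrow> real \<Rightarrow> real \<Rightarrow> real \<Rightarrow> real \<Rightarrow> real \<Rightarrow> real" where
  "capline V W K delta pi0 T = (1 - 2 * delta / T) * pi0 * Cap K V W"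

definition gbar :: "real \<Rightarrow> real \<Rightarrow> real \<Rightarrow> real \<Rightarrow> real \<Rightarrow> real \<Rightarrow> real \<Rightarrow> real \<Rightarrow> real" where
  "gbar L V W K k0 delta pi0 T =
     min (min (phi1 L V W K k0 pi0 T) (capline V W K delta pi0 T)) (phi2 L V W K k0 pi0 T)"

definition optset :: "(real \<Rightarrow> real) \<Rightarrow> real \<Rightarrow> real set" where
  "optset g delta = {T. 2 * delta \<le> T \<and> (\<forall>T'. 2 * delta \<le> T' \<longrightarrow> g T' \<le> g T)}"

end

theory Submission
  imports Defs
begin

definition rr :: "real \<Rightarrow> real \<Rightarrow> real" where
  "rr p x = x / (real_of_int \<lfloor>x\<rfloor> + min ((x - real_of_int \<lfloor>x\<rfloor>) / p) 1)"

lemma rr_aux: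
  assumes "0 < x" "0 < p" "p < 1"
  defines "D \<equiv> real_of_int \<lfloor>x\<rfloor> + min ((x - real_of_int \<lfloor>x\<rfloor>) / p) 1"
  shows "D > 0" "x \<le> D" "p * D \<le> x" "x = D \<longleftrightarrow> x = real_of_int \<lfloor>x\<rfloor>"
proof -
  define j where "j = real_of_int \<lfloor>x\<rfloor>"
  define a where "a = x - j"
  have a0: "0 \<le> a" "a < 1" unfolding a_def j_def by linarith+
  have j0: "j \<ge> 0" unfolding j_def using assms by simp
  have xe: "x = j + a" unfolding a_def by simp
  have D: "D = j + min (a / p) 1" unfolding D_def a_def j_def by simp
  have aa: "a / p * p = a" using assms by simp
  have "D > 0 \<and> x \<le> D \<and> p * D \<le> x \<and> (x = D \<longleftrightarrow> a = 0)"
  proof (cases "a \<le> p")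
    case True
    then have m: "min (a/p) 1 = a / p" using assms by (simp add: divide_le_eq_1)
    have "a \<le> a / p" using a0 assms by (simp add: le_divide_eq mult_left_le)
    moreover have "a = a/p \<longleftrightarrow> a = 0" using assms by (auto simp: field_simps)
    moreover have "p * (j + a/p) = p*j + a" using assms by (simp add: field_simps)
    moreover have "p * j \<le> j" using j0 assms by (simp add: mult_left_le_one_le)
    moreover have "j + a/p > 0" using j0 assms xe \<open>a \<le> a/p\<close> by linarith
    ultimately show ?thesis using D m xe by auto
  next
    case False
    then have m: "min (a/p) 1 = 1" using assms a0 by (simp add: divide_le_eq_1 min_def)
    have "p * j \<le> j" using j0 assms by (simp add: mult_left_le_one_le)
    then show ?thesis using D m xe False a0 j0 assms by (simp add: algebra_simps)
  qed
  then show "D > 0" "x \<le> D" "p * D \<le> x" "x = D \<longleftrightarrow> x = real_of_int \<lfloor>x\<rfloor>"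
    by (auto simp: a_def j_def)
qed

lemma rr_bounds:
  assumes "0 < x" "0 < p" "p < 1"
  shows "p \<le> rr p x" "rr p x \<le> 1"
  using rr_aux[OF assms] unfolding rr_def by (simp_all add: le_divide_eq divide_le_eq)

lemma rr_one:
  assumes "0 < x" "0 < p" "p < 1" "rr p x \<ge> 1"
  shows "\<exists>n::nat. n \<ge> 1 \<and> x = real n"
proof -
  have "x = real_of_int \<lfloor>x\<rfloor>"
    using rr_aux[OF assms(1-3)] assms(4) unfolding rr_def by (simp add: le_divide_eq)
  moreover then have "\<lfloor>x\<rfloor> \<ge> 1" using assms(1) by linarith
  ultimately show ?thesis by (intro exI[of _ "nat \<lfloor>x\<rfloor>"]) auto
qed

lemma rr_nat: "n \<ge> 1 \<Longrightarrow> rr p (real n) = 1"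
  unfolding rr_def by simp

lemma rr_small:
  assumes "0 < x" "x < 1" "0 < p" "p < 1"
  shows "rr p x = max x p"
proof -
  have f: "\<lfloor>x\<rfloor> = 0" using assms by (simp add: floor_eq_iff)
  show ?thesis
  proof (cases "x \<le> p")
    case True
    then have "min (x/p) 1 = x/p" using assms by (simp add: divide_le_eq_1)
    then show ?thesis using f True assms unfolding rr_def by simp
  next
    case False
    then have "min (x/p) 1 = 1" using assms by (simp add: divide_le_eq_1 min_def)
    then show ?thesis using f False assms unfolding rr_def by simp
  qed
qed

lemma phi1_eq:
  assumes "L > 0" "V > 0" "W > 0" "K > 0" "0 < p" "p < 1" "T > 0"
  shows "phi1 L V W K k0 p T = V * k0 * rr p (L / (V * T))"
proof -
  define x where "x = L / (V*T)"
  have x0: "x > 0" using assms by (simp add: x_def)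
  define D where "D = real_of_int \<lfloor>x\<rfloor> + min ((x - real_of_int \<lfloor>x\<rfloor>) / p) 1"
  have D0: "D > 0" using rr_aux(1)[OF x0 assms(5,6)] D_def by simp
  have Kb: "Kbar K V W > 0" using assms by (simp add: Kbar_def)
  have e: "k1 L V W K p T = D / x * p * Kbar K V W"
    unfolding k1_def Let_def x_def[symmetric] D_def by simp
  have r: "rr p (L / (V * T)) = x / D" by (simp add: rr_def x_def D_def)
  have "phi1 L V W K k0 p T = k0 / (D / x * p * Kbar K V W) * p * (V * Kbar K V W)"
    by (simp add: phi1_def Cap_def e)
  also have "\<dots> = V * k0 * (x / D)" using D0 x0 Kb assms by (simp add: field_simps)
  finally show ?thesis using r by simp
qed

lemma phi2_eq:
  assumes "L > 0" "V > 0" "W > 0" "K > 0" "0 < p" "p < 1" "T > 0"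
  shows "phi2 L V W K k0 p T = (K - k0) * W * rr p (L / (W * T))"
proof -
  define x where "x = L / (W*T)"
  have x0: "x > 0" using assms by (simp add: x_def)
  define D where "D = real_of_int \<lfloor>x\<rfloor> + min ((x - real_of_int \<lfloor>x\<rfloor>) / p) 1"
  have D0: "D > 0" using rr_aux(1)[OF x0 assms(5,6)] D_def by simp
  have Kb: "Cap K V W > 0" using assms by (simp add: Kbar_def Cap_def)
  have e: "K - k2 L V W K p T = D / x * p * (Cap K V W / W)"
    unfolding k2_def Let_def x_def[symmetric] D_def by simp
  have r: "rr p (L / (W * T)) = x / D" by (simp add: rr_def x_def D_def)
  have "phi2 L V W K k0 p T = (K - k0) / (D / x * p * (Cap K V W / W)) * p * Cap K V W"
    by (simp add: phi2_def e)
  also have "\<dots> = (K - k0) * W * (x / D)" using D0 x0 Kb assms by (simp add: field_simps)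
  finally show ?thesis using r by simp
qed

lemma cl_mono:
  fixes T T' delta p C :: real
  assumes "0 < T" "T < T'" "delta > 0" "p > 0" "C > 0"
  shows "(1 - 2*delta/T)*p*C < (1 - 2*delta/T')*p*C"
proof -
  have "2*delta/T' < 2*delta/T" using assms by (simp add: divide_strict_left_mono)
  then show ?thesis using assms by (intro mult_strict_right_mono) auto
qed

lemma gen_unique:
  fixes P Q cl G :: "real \<Rightarrow> real"
  assumes L: "L > 0" and s: "s > 0" and d: "delta > 0" and p: "0 < p" "p < 1" and C: "C > 0"
    and qC: "p * C \<le> s * q"
    and P: "\<And>T. T > 0 \<Longrightarrow> P T = s * q * rr p (L / (s * T))"
    and Q: "\<And>T. T > 0 \<Longrightarrow> Q T \<ge> p * C"
    and cl: "\<And>T. cl T = (1 - 2 * delta / T) * p * C"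
    and G: "\<And>T. G T = min (min (P T) (cl T)) (Q T)"
    and Tsl: "q * L / (p * C) + 2 * delta < L / (p * s)"
  shows "optset G delta = {q * L / (p * C) + 2 * delta} \<and>
      G (q * L / (p * C) + 2 * delta) = q * L / (q * L / (p * C) + 2 * delta) \<and>
      G (q * L / (p * C) + 2 * delta) = cl (q * L / (p * C) + 2 * delta) \<and>
      G (q * L / (p * C) + 2 * delta)
        = (SUP T \<in> {L / s .. L / (p * s)}. min (q * L / T) (cl T))"
proof -
  define Ts where "Ts = q * L / (p * C) + 2 * delta"
  have pC: "p * C > 0" using p C by simp
  have "s * q > 0" using qC pC by linarith
  then have q: "q > 0" using s by (simp add: zero_less_mult_iff)
  have qL: "q * L / (p * C) > 0" using q L pC by simp
  have Ts2: "Ts > 2 * delta" using qL Ts_def by simp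
  have Ts0: "Ts > 0" using Ts2 d by simp
  have clTs: "cl Ts = q * L / Ts"
  proof -
    have "cl Ts = (Ts - 2 * delta) / Ts * p * C" using Ts0 by (simp add: cl field_simps)
    also have "\<dots> = (q * L / (p * C)) / Ts * p * C" by (simp add: Ts_def)
    also have "\<dots> = q * L / Ts" using pC Ts0 p C by (simp add: field_simps)
    finally show ?thesis .
  qed
  have "L / s = (q * L) / (s * q)" using q s by simp
  also have "\<dots> \<le> q * L / (p * C)"
    using qC L q pC by (intro frac_le) auto
  finally have "L / s \<le> q * L / (p * C)" .
  then have Tsg: "L / s < Ts" using Ts_def d by simp
  have Tsu: "Ts < L / (p * s)" using Tsl Ts_def by simp
  define xs where "xs = L / (s * Ts)"
  have xs1: "xs < 1" using Tsg s Ts0 unfolding xs_def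
    by (simp add: divide_divide_eq_left[symmetric] del: divide_divide_eq_left)
  have "Ts * (p * s) < L" using Tsu p s by (simp add: less_divide_eq)
  then have xsp: "p < xs" using s Ts0 unfolding xs_def by (simp add: less_divide_eq mult_ac)
  have xs0: "0 < xs" using L s Ts0 by (simp add: xs_def)
  have "P Ts = s * q * xs"
    using P[OF Ts0] rr_small[OF xs0 xs1 p] xsp unfolding xs_def[symmetric] by simp
  also have "\<dots> = q * L / Ts" using s Ts0 by (simp add: xs_def)
  finally have PTs: "P Ts = q * L / Ts" .
  have "2 * delta / Ts > 0" using Ts0 d by simp
  then have "(1 - 2 * delta / Ts) * (p * C) < 1 * (p * C)" using pC
    by (intro mult_strict_right_mono) auto
  then have clTs2: "cl Ts < p * C" by (simp add: cl mult.assoc)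
  have GTs: "G Ts = q * L / Ts" using G PTs clTs clTs2 Q[OF Ts0] by simp
  have strict: "G T < q * L / Ts" if T: "2 * delta \<le> T" "T \<noteq> Ts" for T
  proof -
    have T0: "T > 0" using T d by simp
    show ?thesis
    proof (cases "T < Ts")
      case True
      have "cl T < cl Ts" using cl_mono[OF T0 True d p(1) C] by (simp add: cl)
      then show ?thesis using G clTs by simp
    next
      case False
      then have TT: "Ts < T" using T by simp
      define x where "x = L / (s * T)"
      have x0: "0 < x" using L s T0 by (simp add: x_def)
      have xx: "x < xs" unfolding x_def xs_def using TT L s Ts0
        by (simp add: divide_strict_left_mono)
      have "P T = s * q * max x p" using P[OF T0] rr_small[OF x0 _ p] xx xs1 x_def by simp
      also have "\<dots> < s * q * xs" using xx xsp s q by simp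
      also have "\<dots> = q * L / Ts" using s Ts0 by (simp add: xs_def)
      finally show ?thesis using G by simp
    qed
  qed
  have opt: "optset G delta = {Ts}"
  proof -
    have "Ts \<in> optset G delta" unfolding optset_def
    proof (intro CollectI conjI allI impI)
      show "2 * delta \<le> Ts" using Ts2 by simp
      fix T' assume "2 * delta \<le> T'"
      then show "G T' \<le> G Ts" using strict[of T'] GTs by (cases "T' = Ts") auto
    qed
    moreover have "T = Ts" if "T \<in> optset G delta" for T
    proof (rule ccontr)
      assume ne: "T \<noteq> Ts"
      have T2: "2 * delta \<le> T" and le: "G Ts \<le> G T"
        using that Ts2 unfolding optset_def by auto
      have "G T < G Ts" using strict[OF T2 ne] GTs by simp
      then show False using le by simp
    qed
    ultimately show ?thesis by blast
  qed
  have sup: "(SUP T \<in> {L / s .. L / (p * s)}. min (q * L / T) (cl T)) = q * L / Ts"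
    unfolding image_def
  proof (rule cSup_eq_maximum)
    show "q * L / Ts \<in> {y. \<exists>x\<in>{L / s..L / (p * s)}. y = min (q * L / x) (cl x)}"
      using Tsg Tsu clTs by (intro CollectI bexI[of _ Ts]) auto
  next
    fix y assume "y \<in> {y. \<exists>x\<in>{L / s..L / (p * s)}. y = min (q * L / x) (cl x)}"
    then obtain T where T: "T \<in> {L / s..L / (p * s)}" "y = min (q * L / T) (cl T)" by blast
    have T0: "T > 0" using T(1) L s by (auto intro: order.strict_trans2[of 0 "L/s"])
    show "y \<le> q * L / Ts"
    proof (cases "T < Ts")
      case True
      have "cl T < cl Ts" using cl_mono[OF T0 True d p(1) C] by (simp add: cl)
      then show ?thesis using T clTs by simp
    next
      case False
      then have "q * L / T \<le> q * L / Ts" using Ts0 q L by (simp add: divide_left_mono)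
      then show ?thesis using T by simp
    qed
  qed
  show ?thesis using opt GTs clTs sup unfolding Ts_def by simp
qed

lemma gen_multi:
  fixes P Q cl G :: "real \<Rightarrow> real"
  assumes L: "L > 0" and s: "s > 0" and d: "delta > 0" and p: "0 < p" "p < 1" and C: "C > 0"
    and M: "M \<ge> 0"
    and P: "\<And>T. T > 0 \<Longrightarrow> P T = M * rr p (L / (s * T))"
    and Q: "\<And>T. T > 0 \<Longrightarrow> Q T > M"
    and cl: "\<And>T. cl T = (1 - 2 * delta / T) * p * C"
    and G: "\<And>T. G T = min (min (P T) (cl T)) (Q T)"
    and ex: "\<exists>j::nat. j \<ge> 1 \<and> M \<le> (1 - 2 * delta / (L / (s * real j))) * p * C"
  shows "(\<forall>T. 2 * delta \<le> T \<longrightarrow> G T \<le> M) \<and>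
      (\<forall>T \<in> {L / (s * real j) | j::nat. j \<ge> 1 \<and> M \<le> (1 - 2 * delta / (L / (s * real j))) * p * C}.
         G T = M) \<and>
      {L / (s * real j) | j::nat. j \<ge> 1 \<and> M \<le> (1 - 2 * delta / (L / (s * real j))) * p * C}
        \<subseteq> optset G delta \<and>
      (0 < M \<longrightarrow> optset G delta =
         {L / (s * real j) | j::nat. j \<ge> 1 \<and> M \<le> (1 - 2 * delta / (L / (s * real j))) * p * C})"
proof -
  define S where "S = {L / (s * real j) | j::nat. j \<ge> 1 \<and> M \<le> (1 - 2 * delta / (L / (s * real j))) * p * C}"
  have le: "G T \<le> M" if "2 * delta \<le> T" for T
  proof -
    have T0: "T > 0" using that d by simp
    have "rr p (L / (s * T)) \<le> 1" using rr_bounds(2)[of "L / (s * T)" p] L s T0 p by simp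
    then have "P T \<le> M" using P[OF T0] M by (simp add: mult_left_le)
    then show ?thesis using G by simp
  qed
  have memS: "2 * delta \<le> T \<and> G T = M" if "T \<in> S" for T
  proof -
    obtain j :: nat where j: "j \<ge> 1" "T = L / (s * real j)"
      and c: "M \<le> (1 - 2 * delta / T) * p * C" using \<open>T \<in> S\<close> unfolding S_def by blast
    have T0: "T > 0" using j L s by simp
    have T2: "2 * delta \<le> T"
    proof (rule ccontr)
      assume "\<not> 2 * delta \<le> T"
      then have "2 * delta / T > 1" using T0 by (simp add: less_divide_eq)
      then have "(1 - 2 * delta / T) * (p * C) < 0" using p C by (simp add: mult_neg_pos)
      then show False using c M by (simp add: mult.assoc)
    qed
    have x: "L / (s * T) = real j" using j L s by simp
    have "P T = M" using P[OF T0] x rr_nat[OF j(1)] by simp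
    then have "G T = M" using G c cl Q[OF T0] by simp
    then show ?thesis using T2 by simp
  qed
  have sub: "S \<subseteq> optset G delta" unfolding optset_def using memS le by auto
  have eq: "optset G delta = S" if M0: "0 < M"
  proof
    show "optset G delta \<subseteq> S"
    proof
      fix T assume "T \<in> optset G delta"
      then have T2: "2 * delta \<le> T" and opt: "\<And>T'. 2 * delta \<le> T' \<Longrightarrow> G T' \<le> G T"
        unfolding optset_def by auto
      obtain j0 :: nat where "j0 \<ge> 1" "M \<le> (1 - 2 * delta / (L / (s * real j0))) * p * C"
        using ex by blast
      then have "L / (s * real j0) \<in> S" unfolding S_def by blast
      then have "M \<le> G T" using memS opt by metis
      then have PT: "M \<le> P T" and clT: "M \<le> cl T" using G by auto
      have T0: "T > 0" using T2 d by simp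
      have x0: "L / (s * T) > 0" using L s T0 by simp
      have "M * 1 \<le> M * rr p (L / (s * T))" using PT P[OF T0] by simp
      then have "rr p (L / (s * T)) \<ge> 1" using M0 by (simp add: mult_le_cancel_left_pos)
      then obtain n :: nat where n: "n \<ge> 1" "L / (s * T) = real n"
        using rr_one[OF x0 p] by blast
      have Tn: "T = L / (s * real n)" using n T0 s L by (auto simp: field_simps)
      show "T \<in> S" unfolding S_def using n(1) clT Tn cl by auto
    qed
  qed (use sub in simp)
  show ?thesis using le memS sub eq unfolding S_def by auto
qed

lemma basics:
  assumes "V > 0" "W > 0" "K > 0"
  shows "Kbar K V W > 0" "Kbar K V W < K" "Cap K V W = V * Kbar K V W"
    "(K - Kbar K V W) * W = Cap K V W" "Cap K V W > 0"
    "K - Cap K V W / W = Kbar K V W"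
proof -
  have vw: "V + W > 0" using assms by simp
  show "Kbar K V W > 0" using assms by (simp add: Kbar_def)
  show "Kbar K V W < K" using assms vw by (simp add: Kbar_def field_simps)
  show c: "Cap K V W = V * Kbar K V W" by (simp add: Cap_def)
  show e: "(K - Kbar K V W) * W = Cap K V W" using assms vw
    by (simp add: Kbar_def Cap_def field_simps)
  show "Cap K V W > 0" using assms by (simp add: Kbar_def Cap_def)
  show "K - Cap K V W / W = Kbar K V W" using e[symmetric] assms by (simp add: field_simps)
qed

theorem theorem4p1:
  fixes L V W K k0 delta pi0 :: real
  assumes "L > 0" "V > 0" "W > 0" "K > 0" "delta > 0" "0 < pi0" "pi0 < 1"
    and "0 \<le> k0" "k0 \<le> K"
  shows
   \<comment> \<open>(1) very sparse traffic\<close>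
   "(k0 < pi0 * Kbar K V W \<and>
     (\<exists>j::nat. j \<ge> 1 \<and> V * k0 \<le> (1 - 2 * delta / (L / (V * real j))) * pi0 * Cap K V W)
     \<longrightarrow>
      (\<forall>T. 2 * delta \<le> T \<longrightarrow> gbar L V W K k0 delta pi0 T \<le> V * k0) \<and>
      (\<forall>T \<in> {L / (V * real j) | j::nat. j \<ge> 1 \<and>
              V * k0 \<le> (1 - 2 * delta / (L / (V * real j))) * pi0 * Cap K V W}.
         gbar L V W K k0 delta pi0 T = V * k0) \<and>
      {L / (V * real j) | j::nat. j \<ge> 1 \<and>
              V * k0 \<le> (1 - 2 * delta / (L / (V * real j))) * pi0 * Cap K V W}
        \<subseteq> optset (gbar L V W K k0 delta pi0) delta \<and>
      (0 < k0 \<longrightarrow> optset (gbar L V W K k0 delta pi0) delta =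
         {L / (V * real j) | j::nat. j \<ge> 1 \<and>
              V * k0 \<le> (1 - 2 * delta / (L / (V * real j))) * pi0 * Cap K V W}))
   \<and>
   \<comment> \<open>(2) sparse traffic\<close>
   (pi0 * Kbar K V W \<le> k0 \<and> k0 < Kbar K V W \<and>
     k0 * L / (pi0 * Cap K V W) + 2 * delta < L / (pi0 * V)
     \<longrightarrow>
      optset (gbar L V W K k0 delta pi0) delta = {k0 * L / (pi0 * Cap K V W) + 2 * delta} \<and>
      gbar L V W K k0 delta pi0 (k0 * L / (pi0 * Cap K V W) + 2 * delta)
        = k0 * L / (k0 * L / (pi0 * Cap K V W) + 2 * delta) \<and>
      gbar L V W K k0 delta pi0 (k0 * L / (pi0 * Cap K V W) + 2 * delta)
        = capline V W K delta pi0 (k0 * L / (pi0 * Cap K V W) + 2 * delta) \<and>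
      gbar L V W K k0 delta pi0 (k0 * L / (pi0 * Cap K V W) + 2 * delta)
        = (SUP T \<in> {L / V .. L / (pi0 * V)}. min (k0 * L / T) (capline V W K delta pi0 T)))
   \<and>
   \<comment> \<open>(3) critical traffic: optimum at T = infinity\<close>
   (k0 = Kbar K V W \<longrightarrow>
      (\<forall>T. 2 * delta \<le> T \<longrightarrow> gbar L V W K k0 delta pi0 T = capline V W K delta pi0 T) \<and>
      optset (gbar L V W K k0 delta pi0) delta = {} \<and>
      (gbar L V W K k0 delta pi0 \<longlongrightarrow> pi0 * Cap K V W) at_top)
   \<and>
   \<comment> \<open>(4) dense traffic\<close>
   (Kbar K V W < k0 \<and> k0 \<le> K - pi0 * Cap K V W / W \<and>
     (K - k0) * L / (pi0 * Cap K V W) + 2 * delta < L / (pi0 * W)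
     \<longrightarrow>
      optset (gbar L V W K k0 delta pi0) delta = {(K - k0) * L / (pi0 * Cap K V W) + 2 * delta} \<and>
      gbar L V W K k0 delta pi0 ((K - k0) * L / (pi0 * Cap K V W) + 2 * delta)
        = (K - k0) * L / ((K - k0) * L / (pi0 * Cap K V W) + 2 * delta) \<and>
      gbar L V W K k0 delta pi0 ((K - k0) * L / (pi0 * Cap K V W) + 2 * delta)
        = capline V W K delta pi0 ((K - k0) * L / (pi0 * Cap K V W) + 2 * delta) \<and>
      gbar L V W K k0 delta pi0 ((K - k0) * L / (pi0 * Cap K V W) + 2 * delta)
        = (SUP T \<in> {L / W .. L / (pi0 * W)}. min ((K - k0) * L / T) (capline V W K delta pi0 T)))
   \<and>
   \<comment> \<open>(5) very dense traffic\<close>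
   (K - pi0 * Cap K V W / W < k0 \<and>
     (\<exists>j::nat. j \<ge> 1 \<and> (K - k0) * W \<le> (1 - 2 * delta / (L / (W * real j))) * pi0 * Cap K V W)
     \<longrightarrow>
      (\<forall>T. 2 * delta \<le> T \<longrightarrow> gbar L V W K k0 delta pi0 T \<le> (K - k0) * W) \<and>
      (\<forall>T \<in> {L / (W * real j) | j::nat. j \<ge> 1 \<and>
              (K - k0) * W \<le> (1 - 2 * delta / (L / (W * real j))) * pi0 * Cap K V W}.
         gbar L V W K k0 delta pi0 T = (K - k0) * W) \<and>
      {L / (W * real j) | j::nat. j \<ge> 1 \<and>
              (K - k0) * W \<le> (1 - 2 * delta / (L / (W * real j))) * pi0 * Cap K V W}
        \<subseteq> optset (gbar L V W K k0 delta pi0) delta \<and>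
      (k0 < K \<longrightarrow> optset (gbar L V W K k0 delta pi0) delta =
         {L / (W * real j) | j::nat. j \<ge> 1 \<and>
              (K - k0) * W \<le> (1 - 2 * delta / (L / (W * real j))) * pi0 * Cap K V W}))"
proof -
  note b = basics[OF assms(2,3,4)]
  define Kb where "Kb = Kbar K V W"
  define C where "C = Cap K V W"
  have Kb0: "Kb > 0" and KbK: "Kb < K" and CV: "C = V * Kb" and CW: "(K - Kb) * W = C"
    and C0: "C > 0" and CW2: "K - C / W = Kb" using b by (simp_all add: Kb_def C_def)
  have p: "0 < pi0" "pi0 < 1" using assms by auto
  have ph1: "phi1 L V W K k0 pi0 T = V * k0 * rr pi0 (L / (V * T))" if "T > 0" for T
    using phi1_eq[OF assms(1-4) p that] .
  have ph2: "phi2 L V W K k0 pi0 T = (K - k0) * W * rr pi0 (L / (W * T))" if "T > 0" for T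
    using phi2_eq[OF assms(1-4) p that] .
  have ph1g: "phi1 L V W K k0 pi0 T \<ge> V * k0 * pi0" if "T > 0" for T
  proof -
    have "rr pi0 (L / (V * T)) \<ge> pi0" using rr_bounds(1)[OF _ p] assms that by simp
    moreover have "V * k0 \<ge> 0" using assms by simp
    ultimately show ?thesis using ph1[OF that] by (simp add: mult_left_mono)
  qed
  have ph2g: "phi2 L V W K k0 pi0 T \<ge> (K - k0) * W * pi0" if "T > 0" for T
  proof -
    have "rr pi0 (L / (W * T)) \<ge> pi0" using rr_bounds(1)[OF _ p] assms that by simp
    moreover have "(K - k0) * W \<ge> 0" using assms by simp
    ultimately show ?thesis using ph2[OF that] by (simp add: mult_left_mono)
  qed
  have cl: "capline V W K delta pi0 T = (1 - 2 * delta / T) * pi0 * Cap K V W" for T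
    by (simp add: capline_def)
  have G: "gbar L V W K k0 delta pi0 T = min (min (phi1 L V W K k0 pi0 T) (capline V W K delta pi0 T))
     (phi2 L V W K k0 pi0 T)" for T by (simp add: gbar_def)
  have G': "gbar L V W K k0 delta pi0 T = min (min (phi2 L V W K k0 pi0 T) (capline V W K delta pi0 T))
     (phi1 L V W K k0 pi0 T)" for T by (simp add: gbar_def min_def)
  have clle: "capline V W K delta pi0 T \<le> pi0 * C" if "T > 0" for T
  proof -
    have "2 * delta / T \<ge> 0" using that assms by simp
    then have "(1 - 2 * delta / T) * (pi0 * C) \<le> 1 * (pi0 * C)" using p C0
      by (intro mult_right_mono) auto
    then show ?thesis by (simp add: cl C_def mult.assoc)
  qed

  have part1: "(k0 < pi0 * Kbar K V W \<and>
     (\<exists>j::nat. j \<ge> 1 \<and> V * k0 \<le> (1 - 2 * delta / (L / (V * real j))) * pi0 * Cap K V W)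
     \<longrightarrow>
      (\<forall>T. 2 * delta \<le> T \<longrightarrow> gbar L V W K k0 delta pi0 T \<le> V * k0) \<and>
      (\<forall>T \<in> {L / (V * real j) | j::nat. j \<ge> 1 \<and>
              V * k0 \<le> (1 - 2 * delta / (L / (V * real j))) * pi0 * Cap K V W}.
         gbar L V W K k0 delta pi0 T = V * k0) \<and>
      {L / (V * real j) | j::nat. j \<ge> 1 \<and>
              V * k0 \<le> (1 - 2 * delta / (L / (V * real j))) * pi0 * Cap K V W}
        \<subseteq> optset (gbar L V W K k0 delta pi0) delta \<and>
      (0 < k0 \<longrightarrow> optset (gbar L V W K k0 delta pi0) delta =
         {L / (V * real j) | j::nat. j \<ge> 1 \<and>
              V * k0 \<le> (1 - 2 * delta / (L / (V * real j))) * pi0 * Cap K V W}))"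
  proof (rule impI)
    assume h: "k0 < pi0 * Kbar K V W \<and>
     (\<exists>j::nat. j \<ge> 1 \<and> V * k0 \<le> (1 - 2 * delta / (L / (V * real j))) * pi0 * Cap K V W)"
    have k0lt: "k0 < pi0 * Kb" using h by (simp add: Kb_def)
    have "V * k0 < V * (pi0 * Kb)" using k0lt assms by simp
    then have a1: "V * k0 < pi0 * C" using CV by (simp add: mult_ac)
    have "pi0 * Kb \<le> Kb" using Kb0 p by simp
    then have "k0 \<le> Kb" using k0lt by simp
    then have "(K - Kb) * W \<le> (K - k0) * W" using assms by simp
    then have "pi0 * C \<le> (K - k0) * W * pi0" using CW p by (simp add: mult_ac)
    then have Q: "phi2 L V W K k0 pi0 T > V * k0" if "T > 0" for T
      using ph2g[OF that] a1 by simp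
    have M0: "V * k0 \<ge> 0" using assms by simp
    have ex: "\<exists>j::nat. j \<ge> 1 \<and> V * k0 \<le> (1 - 2 * delta / (L / (V * real j))) * pi0 * Cap K V W"
      using h by blast
    note R = gen_multi[of L V delta pi0 "Cap K V W" "V * k0" "phi1 L V W K k0 pi0" "phi2 L V W K k0 pi0"
       "capline V W K delta pi0" "gbar L V W K k0 delta pi0", OF assms(1,2,5) p b(5) M0 ph1 Q cl G ex]
    have "0 < k0 \<Longrightarrow> 0 < V * k0" using assms by simp
    then show "(\<forall>T. 2 * delta \<le> T \<longrightarrow> gbar L V W K k0 delta pi0 T \<le> V * k0) \<and>
      (\<forall>T \<in> {L / (V * real j) | j::nat. j \<ge> 1 \<and>
              V * k0 \<le> (1 - 2 * delta / (L / (V * real j))) * pi0 * Cap K V W}.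
         gbar L V W K k0 delta pi0 T = V * k0) \<and>
      {L / (V * real j) | j::nat. j \<ge> 1 \<and>
              V * k0 \<le> (1 - 2 * delta / (L / (V * real j))) * pi0 * Cap K V W}
        \<subseteq> optset (gbar L V W K k0 delta pi0) delta \<and>
      (0 < k0 \<longrightarrow> optset (gbar L V W K k0 delta pi0) delta =
         {L / (V * real j) | j::nat. j \<ge> 1 \<and>
              V * k0 \<le> (1 - 2 * delta / (L / (V * real j))) * pi0 * Cap K V W})"
      using R by blast
  qed
  have part2: "(pi0 * Kbar K V W \<le> k0 \<and> k0 < Kbar K V W \<and>
     k0 * L / (pi0 * Cap K V W) + 2 * delta < L / (pi0 * V)
     \<longrightarrow>
      optset (gbar L V W K k0 delta pi0) delta = {k0 * L / (pi0 * Cap K V W) + 2 * delta} \<and>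
      gbar L V W K k0 delta pi0 (k0 * L / (pi0 * Cap K V W) + 2 * delta)
        = k0 * L / (k0 * L / (pi0 * Cap K V W) + 2 * delta) \<and>
      gbar L V W K k0 delta pi0 (k0 * L / (pi0 * Cap K V W) + 2 * delta)
        = capline V W K delta pi0 (k0 * L / (pi0 * Cap K V W) + 2 * delta) \<and>
      gbar L V W K k0 delta pi0 (k0 * L / (pi0 * Cap K V W) + 2 * delta)
        = (SUP T \<in> {L / V .. L / (pi0 * V)}. min (k0 * L / T) (capline V W K delta pi0 T)))"
  proof (rule impI)
    assume h: "pi0 * Kbar K V W \<le> k0 \<and> k0 < Kbar K V W \<and>
     k0 * L / (pi0 * Cap K V W) + 2 * delta < L / (pi0 * V)"
    have "V * (pi0 * Kb) \<le> V * k0" using h assms by (simp add: Kb_def)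
    then have qC: "pi0 * Cap K V W \<le> V * k0" using CV by (simp add: C_def mult_ac)
    have "(K - Kb) * W \<le> (K - k0) * W" using h assms by (simp add: Kb_def)
    then have "pi0 * C \<le> (K - k0) * W * pi0" using CW p by (simp add: mult_ac)
    then have Q: "phi2 L V W K k0 pi0 T \<ge> pi0 * Cap K V W" if "T > 0" for T
      using ph2g[OF that] by (simp add: C_def)
    have Tsl: "k0 * L / (pi0 * Cap K V W) + 2 * delta < L / (pi0 * V)" using h by simp
    show "optset (gbar L V W K k0 delta pi0) delta = {k0 * L / (pi0 * Cap K V W) + 2 * delta} \<and>
      gbar L V W K k0 delta pi0 (k0 * L / (pi0 * Cap K V W) + 2 * delta)
        = k0 * L / (k0 * L / (pi0 * Cap K V W) + 2 * delta) \<and>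
      gbar L V W K k0 delta pi0 (k0 * L / (pi0 * Cap K V W) + 2 * delta)
        = capline V W K delta pi0 (k0 * L / (pi0 * Cap K V W) + 2 * delta) \<and>
      gbar L V W K k0 delta pi0 (k0 * L / (pi0 * Cap K V W) + 2 * delta)
        = (SUP T \<in> {L / V .. L / (pi0 * V)}. min (k0 * L / T) (capline V W K delta pi0 T))"
      by (rule gen_unique[of L V delta pi0 "Cap K V W" k0 "phi1 L V W K k0 pi0" "phi2 L V W K k0 pi0"
       "capline V W K delta pi0" "gbar L V W K k0 delta pi0", OF assms(1,2,5) p b(5) qC ph1 Q cl G Tsl])
  qed
  have part4: "(Kbar K V W < k0 \<and> k0 \<le> K - pi0 * Cap K V W / W \<and>
     (K - k0) * L / (pi0 * Cap K V W) + 2 * delta < L / (pi0 * W)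
     \<longrightarrow>
      optset (gbar L V W K k0 delta pi0) delta = {(K - k0) * L / (pi0 * Cap K V W) + 2 * delta} \<and>
      gbar L V W K k0 delta pi0 ((K - k0) * L / (pi0 * Cap K V W) + 2 * delta)
        = (K - k0) * L / ((K - k0) * L / (pi0 * Cap K V W) + 2 * delta) \<and>
      gbar L V W K k0 delta pi0 ((K - k0) * L / (pi0 * Cap K V W) + 2 * delta)
        = capline V W K delta pi0 ((K - k0) * L / (pi0 * Cap K V W) + 2 * delta) \<and>
      gbar L V W K k0 delta pi0 ((K - k0) * L / (pi0 * Cap K V W) + 2 * delta)
        = (SUP T \<in> {L / W .. L / (pi0 * W)}. min ((K - k0) * L / T) (capline V W K delta pi0 T)))"
  proof (rule impI)
    assume h: "Kbar K V W < k0 \<and> k0 \<le> K - pi0 * Cap K V W / W \<and>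
     (K - k0) * L / (pi0 * Cap K V W) + 2 * delta < L / (pi0 * W)"
    have "pi0 * Cap K V W / W \<le> K - k0" using h by simp
    then have qC: "pi0 * Cap K V W \<le> W * (K - k0)" using assms by (simp add: divide_le_eq mult_ac)
    have P: "phi2 L V W K k0 pi0 T = W * (K - k0) * rr pi0 (L / (W * T))" if "T > 0" for T
      using ph2[OF that] by (simp add: mult_ac)
    have "V * Kb * pi0 \<le> V * k0 * pi0" using h assms by (simp add: Kb_def)
    then have Q: "phi1 L V W K k0 pi0 T \<ge> pi0 * Cap K V W" if "T > 0" for T
      using ph1g[OF that] CV by (simp add: C_def mult_ac)
    have Tsl: "(K - k0) * L / (pi0 * Cap K V W) + 2 * delta < L / (pi0 * W)" using h by simp
    show "optset (gbar L V W K k0 delta pi0) delta = {(K - k0) * L / (pi0 * Cap K V W) + 2 * delta} \<and>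
      gbar L V W K k0 delta pi0 ((K - k0) * L / (pi0 * Cap K V W) + 2 * delta)
        = (K - k0) * L / ((K - k0) * L / (pi0 * Cap K V W) + 2 * delta) \<and>
      gbar L V W K k0 delta pi0 ((K - k0) * L / (pi0 * Cap K V W) + 2 * delta)
        = capline V W K delta pi0 ((K - k0) * L / (pi0 * Cap K V W) + 2 * delta) \<and>
      gbar L V W K k0 delta pi0 ((K - k0) * L / (pi0 * Cap K V W) + 2 * delta)
        = (SUP T \<in> {L / W .. L / (pi0 * W)}. min ((K - k0) * L / T) (capline V W K delta pi0 T))"
      by (rule gen_unique[of L W delta pi0 "Cap K V W" "K - k0" "phi2 L V W K k0 pi0" "phi1 L V W K k0 pi0"
       "capline V W K delta pi0" "gbar L V W K k0 delta pi0", OF assms(1,3,5) p b(5) qC P Q cl G' Tsl])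
  qed
  have part5: "(K - pi0 * Cap K V W / W < k0 \<and>
     (\<exists>j::nat. j \<ge> 1 \<and> (K - k0) * W \<le> (1 - 2 * delta / (L / (W * real j))) * pi0 * Cap K V W)
     \<longrightarrow>
      (\<forall>T. 2 * delta \<le> T \<longrightarrow> gbar L V W K k0 delta pi0 T \<le> (K - k0) * W) \<and>
      (\<forall>T \<in> {L / (W * real j) | j::nat. j \<ge> 1 \<and>
              (K - k0) * W \<le> (1 - 2 * delta / (L / (W * real j))) * pi0 * Cap K V W}.
         gbar L V W K k0 delta pi0 T = (K - k0) * W) \<and>
      {L / (W * real j) | j::nat. j \<ge> 1 \<and>
              (K - k0) * W \<le> (1 - 2 * delta / (L / (W * real j))) * pi0 * Cap K V W}
        \<subseteq> optset (gbar L V W K k0 delta pi0) delta \<and>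
      (k0 < K \<longrightarrow> optset (gbar L V W K k0 delta pi0) delta =
         {L / (W * real j) | j::nat. j \<ge> 1 \<and>
              (K - k0) * W \<le> (1 - 2 * delta / (L / (W * real j))) * pi0 * Cap K V W}))"
  proof (rule impI)
    assume h: "K - pi0 * Cap K V W / W < k0 \<and>
     (\<exists>j::nat. j \<ge> 1 \<and> (K - k0) * W \<le> (1 - 2 * delta / (L / (W * real j))) * pi0 * Cap K V W)"
    have "K - k0 < pi0 * Cap K V W / W" using h by simp
    then have a1: "(K - k0) * W < pi0 * C" using assms by (simp add: less_divide_eq C_def)
    have "pi0 * Cap K V W / W \<le> Cap K V W / W" using p b(5) assms by (simp add: divide_right_mono)
    then have "Kb \<le> k0" using h CW2 by (simp add: C_def)
    then have "V * Kb * pi0 \<le> V * k0 * pi0" using assms by simp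
    then have Q: "phi1 L V W K k0 pi0 T > (K - k0) * W" if "T > 0" for T
      using ph1g[OF that] CV a1 by (simp add: mult_ac)
    have M0: "(K - k0) * W \<ge> 0" using assms by simp
    have ex: "\<exists>j::nat. j \<ge> 1 \<and> (K - k0) * W \<le> (1 - 2 * delta / (L / (W * real j))) * pi0 * Cap K V W"
      using h by blast
    note R = gen_multi[of L W delta pi0 "Cap K V W" "(K - k0) * W" "phi2 L V W K k0 pi0" "phi1 L V W K k0 pi0"
       "capline V W K delta pi0" "gbar L V W K k0 delta pi0", OF assms(1,3,5) p b(5) M0 ph2 Q cl G' ex]
    have "k0 < K \<Longrightarrow> 0 < (K - k0) * W" using assms by simp
    then show "(\<forall>T. 2 * delta \<le> T \<longrightarrow> gbar L V W K k0 delta pi0 T \<le> (K - k0) * W) \<and>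
      (\<forall>T \<in> {L / (W * real j) | j::nat. j \<ge> 1 \<and>
              (K - k0) * W \<le> (1 - 2 * delta / (L / (W * real j))) * pi0 * Cap K V W}.
         gbar L V W K k0 delta pi0 T = (K - k0) * W) \<and>
      {L / (W * real j) | j::nat. j \<ge> 1 \<and>
              (K - k0) * W \<le> (1 - 2 * delta / (L / (W * real j))) * pi0 * Cap K V W}
        \<subseteq> optset (gbar L V W K k0 delta pi0) delta \<and>
      (k0 < K \<longrightarrow> optset (gbar L V W K k0 delta pi0) delta =
         {L / (W * real j) | j::nat. j \<ge> 1 \<and>
              (K - k0) * W \<le> (1 - 2 * delta / (L / (W * real j))) * pi0 * Cap K V W})"
      using R by blast
  qed
  have part3: "(k0 = Kbar K V W \<longrightarrow>
      (\<forall>T. 2 * delta \<le> T \<longrightarrow> gbar L V W K k0 delta pi0 T = capline V W K delta pi0 T) \<and>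
      optset (gbar L V W K k0 delta pi0) delta = {} \<and>
      (gbar L V W K k0 delta pi0 \<longlongrightarrow> pi0 * Cap K V W) at_top)"
  proof (rule impI)
    assume h: "k0 = Kbar K V W"
    have eqc: "gbar L V W K k0 delta pi0 T = capline V W K delta pi0 T" if T: "2 * delta \<le> T" for T
    proof -
      have T0: "T > 0" using T assms by simp
      have "phi1 L V W K k0 pi0 T \<ge> pi0 * C" using ph1g[OF T0] h CV by (simp add: Kb_def mult_ac)
      moreover have "(K - k0) * W = C" using h CW Kb_def by simp
      then have "phi2 L V W K k0 pi0 T \<ge> pi0 * C" using ph2g[OF T0] by (simp add: mult.commute)
      ultimately show ?thesis using clle[OF T0] G by simp
    qed
    have emp: "optset (gbar L V W K k0 delta pi0) delta = {}"
    proof (rule ccontr)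
      assume "optset (gbar L V W K k0 delta pi0) delta \<noteq> {}"
      then obtain T where "T \<in> optset (gbar L V W K k0 delta pi0) delta" by blast
      then have T2: "2 * delta \<le> T" and le: "gbar L V W K k0 delta pi0 (T + 1) \<le> gbar L V W K k0 delta pi0 T"
        unfolding optset_def by auto
      have T0: "T > 0" using T2 assms by simp
      have "capline V W K delta pi0 T < capline V W K delta pi0 (T + 1)"
        using cl_mono[OF T0 _ assms(5) p(1) b(5)] by (simp add: cl)
      then show False using le eqc[OF T2] eqc[of "T + 1"] T2 by simp
    qed
    have lim0: "((\<lambda>T. 2 * delta / T) \<longlongrightarrow> 0) at_top"
      by (intro tendsto_divide_0[OF tendsto_const] filterlim_at_top_imp_at_infinity filterlim_ident)
    have "((\<lambda>T. (1 - 2 * delta / T) * pi0 * Cap K V W) \<longlongrightarrow> (1 - 0) * pi0 * Cap K V W) at_top"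
      by (intro tendsto_intros lim0)
    then have lim: "(capline V W K delta pi0 \<longlongrightarrow> pi0 * Cap K V W) at_top"
      by (simp add: capline_def[abs_def])
    have ev: "\<forall>\<^sub>F T in at_top. capline V W K delta pi0 T = gbar L V W K k0 delta pi0 T"
      using eventually_ge_at_top[of "2 * delta"] by eventually_elim (simp add: eqc)
    have "(gbar L V W K k0 delta pi0 \<longlongrightarrow> pi0 * Cap K V W) at_top"
      using tendsto_cong[OF ev] lim by simp
    then show "(\<forall>T. 2 * delta \<le> T \<longrightarrow> gbar L V W K k0 delta pi0 T = capline V W K delta pi0 T) \<and>
      optset (gbar L V W K k0 delta pi0) delta = {} \<and>
      (gbar L V W K k0 delta pi0 \<longlongrightarrow> pi0 * Cap K V W) at_top" using eqc emp by blast
  qed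
  show ?thesis by (intro conjI part1 part2 part3 part4 part5)
qed

end
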